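(* Let $n>m\ge3$ and let $[x]$, $\mathfrak{h}_{m,n}$, $\varepsilon_j$, the functions $u_{i,j}(\varepsilon)$, the rational functions $S^w_{i,j}$ and the linear action of $W_{m,n}$ on $\mathfrak{h}^*_{m,n}$ be as in the context. Then the meromorphic map $\varphi_{m,n}:\mathfrak{h}_{m,n}\dashrightarrow\mathbb{X}_{m,n}$ with $u$-coordinates $u_{i,j}(\varepsilon)$ is $W_{m,n}$-equivariant with respect to the linear action on $\mathfrak{h}_{m,n}$ and the birational action on $\mathbb{X}_{m,n}$; explicitly, for every $w\in W_{m,n}$ and all $1\le i\le m-1$, $m+2\le j\le n$, $$u_{i,j}(w(\varepsilon))=S^w_{i,j}(u(\varepsilon))$$ as meromorphic functions on $\mathfrak{h}_{m,n}$, where $u_{i,j}(w(\varepsilon))$ denotes the function obtained from $u_{i,j}(\varepsilon)$ by substituting $\varepsilon_k\mapsto w.\varepsilon_k$ for $k=0,\dots,n$. (The same holds for the induced map $L_{m,n}\otimes_{\mathbb{Z}}(\mathbb{C}/\Omega)\dashrightarrow\mathbb{X}_{m,n}$, since the $u_{i,j}(\varepsilon)$ are $\Omega$-periodic in each $\varepsilon_k$.)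
   Context: $[x]$ is a fixed nonzero holomorphic function on $\mathbb{C}$, odd, satisfying the Riemann relation $[x+y][x-y][u+v][u-v]=[x+u][x-u][y+v][y-v]-[x+v][x-v][y+u][y-u]$ for all $x,y,u,v$; $\Omega=\{a:[a]=0\}$ is then a lattice of rank $\le2$ and $[x]$ is quasi-periodic with respect to it. $\mathfrak{h}_{m,n}=\bigoplus_{j=0}^n\mathbb{C}e_j$ with symmetric bilinear form $\langle e_0,e_0\rangle=-(m-2)$, $\langle e_j,e_j\rangle=1$ ($1\le j\le n$), $\langle e_i,e_j\rangle=0$ ($i\ne j$); $\varepsilon_j=\langle e_j,\cdot\rangle\in\mathfrak{h}^*_{m,n}$ serve as coordinates. $h_0=e_0-e_1-\dots-e_m$, $h_k=e_k-e_{k+1}$ ($1\le k\le n-1$), $\alpha_k=\langle h_k,\cdot\rangle$. $W_{m,n}$ is the Coxeter group with generators $s_0,\dots,s_{n-1}$ for the tree $T_{2,m,n-m}$ (chain $1-2-\cdots-(n-1)$, node $0$ attached to node $m$), acting on $\mathfrak{h}^*_{m,n}$ by $s_k.\lambda=\lambda-\langle h_k,\lambda\rangle\alpha_k$. $\mathbb{X}_{m,n}$ is the space of $n$-tuples of points of $\mathbb{P}^{m-1}(\mathbb{C})$ in general position (distinct, no $m$ on a hyperplane) modulo $PGL_m(\mathbb{C})$, identified with a Zariski open subset of $\mathbb{C}^{(m-1)(n-m-1)}$ via the normal form $p_1,\dots,p_m$ = coordinate points, $p_{m+1}=(1:\dots:1)$, $p_j=(u_{1,j}:\dots:u_{m-1,j}:1)$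 ($m+2\le j\le n$). $W_{m,n}$ acts birationally on the right: $s_k$ ($k\ge1$) swaps $p_k,p_{k+1}$; $s_0$ applies the standard Cremona transformation $(x_1:\dots:x_m)\mapsto(x_1^{-1}:\dots:x_m^{-1})$ (in coordinates where $p_1,\dots,p_m$ are the coordinate points) to $p_{m+1},\dots,p_n$. The induced left action on $\mathbb{C}(u)$, $w(\varphi)([P])=\varphi([P].w)$, defines rational functions $S^w_{i,j}$ by $w(u_{i,j})=S^w_{i,j}(u)$. With $\varepsilon_{i,j}=\varepsilon_i-\varepsilon_j$ and $\alpha_0=\varepsilon_0-\varepsilon_1-\dots-\varepsilon_m$, put $$u_{i,j}(\varepsilon)=\frac{[\alpha_0+\varepsilon_{m,m+1}][\varepsilon_{i,m+1}]}{[\varepsilon_{m,m+1}][\alpha_0+\varepsilon_{i,m+1}]}\cdot\frac{[\alpha_0+\varepsilon_{i,j}][\varepsilon_{m,j}]}{[\varepsilon_{i,j}][\alpha_0+\varepsilon_{m,j}]}.$$ For generic $\varepsilon$ this is the $u$-coordinate of the configuration $[p(\varepsilon_1),\dots,p(\varepsilon_n)]$ where $p(t)=\big(\frac{[\lambda+\mu_1-t]}{[\lambda][\mu_1-t]}:\dots:\frac{[\lambda+\mu_m-t]}{[\lambda][\mu_m-t]}\big)$ for any $\lambda,\mu$ with $\varepsilon_0=\lambda+\mu_1+\dots+\mu_m$. *)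

theory Defs
  imports "HOL-Analysis.Analysis"
begin

definition riemann_relation :: "(complex \<Rightarrow> complex) \<Rightarrow> bool" where
  "riemann_relation s \<longleftrightarrow> (\<forall>x y u v.
     s (x+y) * s (x-y) * s (u+v) * s (u-v) =
     s (x+u) * s (x-u) * s (y+v) * s (y-v) - s (x+v) * s (x-v) * s (y+u) * s (y-u))"

text \<open>A vector of h_{m,n} is a coefficient function x with x = sum_{j=0..n} x_j e_j;
  the carrier is the set of such functions vanishing beyond n.  A linear functional
  on h is represented by its values on the basis e_0,...,e_n.\<close>

definition hspace :: "nat \<Rightarrow> (nat \<Rightarrow> complex) set" where
  "hspace n = {x. \<forall>j>n. x j = 0}"

text \<open>Gram matrix: <e_0,e_0> = -(m-2), <e_j,e_j> = 1, orthogonal basis.\<close>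
definition gram :: "nat \<Rightarrow> nat \<Rightarrow> complex" where
  "gram m j = (if j = 0 then - (of_nat m - 2) else 1)"

definition pairing :: "nat \<Rightarrow> (nat \<Rightarrow> complex) \<Rightarrow> (nat \<Rightarrow> complex) \<Rightarrow> complex" where
  "pairing n lam x = (\<Sum>j\<le>n. lam j * x j)"

text \<open>epsilon_k = <e_k, . > : its value on e_j is <e_k,e_j>.\<close>
definition epsf :: "nat \<Rightarrow> nat \<Rightarrow> (nat \<Rightarrow> complex)" where
  "epsf m k = (\<lambda>j. if j = k then gram m k else 0)"

definition hvec :: "nat \<Rightarrow> nat \<Rightarrow> (nat \<Rightarrow> complex)" where
  "hvec m k = (if k = 0
      then (\<lambda>j. if j = 0 then 1 else if 1 \<le> j \<and> j \<le> m then -1 else 0)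
      else (\<lambda>j. if j = k then 1 else if j = k + 1 then -1 else 0))"

text \<open>alpha_k = <h_k, . > : its value on e_j is <h_k,e_j>.\<close>
definition alpha :: "nat \<Rightarrow> nat \<Rightarrow> (nat \<Rightarrow> complex)" where
  "alpha m k = (\<lambda>j. gram m j * hvec m k j)"

definition srefl :: "nat \<Rightarrow> nat \<Rightarrow> nat \<Rightarrow> (nat \<Rightarrow> complex) \<Rightarrow> (nat \<Rightarrow> complex)" where
  "srefl m n k lam = (\<lambda>j. lam j - pairing n lam (hvec m k) * alpha m k j)"

text \<open>An element w of W_{m,n} is given by a word [a_1,...,a_r] in the generators
  s_0,...,s_{n-1}, w = s_{a_1} ... s_{a_r}; left linear action on h^*.\<close>
definition wact :: "nat \<Rightarrow> nat \<Rightarrow> nat list \<Rightarrow> (nat \<Rightarrow> complex) \<Rightarrow> (nat \<Rightarrow> complex)" where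
  "wact m n ws lam = foldr (srefl m n) ws lam"

text \<open>e k stands for the value of epsilon_k.\<close>
definition ufun :: "(complex \<Rightarrow> complex) \<Rightarrow> nat \<Rightarrow> nat \<Rightarrow> nat \<Rightarrow> (nat \<Rightarrow> complex) \<Rightarrow> complex" where
  "ufun s m i j e =
    (let a0 = e 0 - (\<Sum>l=1..m. e l) in
      (s (a0 + (e m - e (m+1))) * s (e i - e (m+1))) /
      (s (e m - e (m+1)) * s (a0 + (e i - e (m+1)))) *
      ((s (a0 + (e i - e j)) * s (e m - e j)) /
       (s (e i - e j) * s (a0 + (e m - e j)))))"

text \<open>A configuration is P :: nat => (nat => complex): P j is a homogeneous coordinate
  vector (coordinates indexed 1..m) of the point p_j, j = 1..n.\<close>

definition detn :: "nat \<Rightarrow> (nat \<Rightarrow> nat \<Rightarrow> complex) \<Rightarrow> complex" where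
  "detn m M = (\<Sum>\<pi> | \<pi> permutes {1..m}. of_int (sign \<pi>) * (\<Prod>r\<in>{1..m}. M r (\<pi> r)))"

text \<open>Determinant of the matrix with columns p_1,...,p_m, column l replaced by q
  (Cramer numerator for the l-th coordinate of q in the basis p_1,...,p_m).\<close>
definition Dl :: "nat \<Rightarrow> (nat \<Rightarrow> nat \<Rightarrow> complex) \<Rightarrow> nat \<Rightarrow> (nat \<Rightarrow> complex) \<Rightarrow> complex" where
  "Dl m P l q = detn m (\<lambda>r c. if c = l then q r else P c r)"

text \<open>Coordinates of q with respect to the basis p_1,...,p_m.\<close>
definition bcoord :: "nat \<Rightarrow> (nat \<Rightarrow> nat \<Rightarrow> complex) \<Rightarrow> nat \<Rightarrow> (nat \<Rightarrow> complex) \<Rightarrow> complex" where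
  "bcoord m P l q = Dl m P l q / detn m (\<lambda>r c. P c r)"

text \<open>u-coordinates of [P]: the normal form is obtained by the linear change of
  coordinates to the basis p_1..p_m followed by the diagonal rescaling making
  p_{m+1} = (1:...:1), then dehomogenising by the last coordinate.\<close>
definition ucoord :: "nat \<Rightarrow> (nat \<Rightarrow> nat \<Rightarrow> complex) \<Rightarrow> nat \<Rightarrow> nat \<Rightarrow> complex" where
  "ucoord m P i j =
     (bcoord m P i (P j) / bcoord m P i (P (m+1))) /
     (bcoord m P m (P j) / bcoord m P m (P (m+1)))"

definition normal_config :: "nat \<Rightarrow> (nat \<Rightarrow> nat \<Rightarrow> complex) \<Rightarrow> (nat \<Rightarrow> nat \<Rightarrow> complex)" where
  "normal_config m u = (\<lambda>j. if j \<le> m then (\<lambda>r. if r = j then 1 else 0)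
                        else if j = m + 1 then (\<lambda>r. 1)
                        else (\<lambda>r. if r = m then 1 else u r j))"

text \<open>s_k (k >= 1): swap p_k and p_{k+1};  s_0: standard Cremona transformation in the
  coordinates where p_1..p_m are coordinate points, applied to p_{m+1},...,p_n.\<close>
definition cswap :: "nat \<Rightarrow> (nat \<Rightarrow> nat \<Rightarrow> complex) \<Rightarrow> (nat \<Rightarrow> nat \<Rightarrow> complex)" where
  "cswap k P = P(k := P (k+1), k+1 := P k)"

definition ccremona :: "nat \<Rightarrow> nat \<Rightarrow> (nat \<Rightarrow> nat \<Rightarrow> complex) \<Rightarrow> (nat \<Rightarrow> nat \<Rightarrow> complex)" where
  "ccremona m n P = (\<lambda>j. if m + 1 \<le> j \<and> j \<le> n
       then (\<lambda>r. \<Sum>l=1..m. inverse (bcoord m P l (P j)) * P l r)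
       else P j)"

definition ract :: "nat \<Rightarrow> nat \<Rightarrow> (nat \<Rightarrow> nat \<Rightarrow> complex) \<Rightarrow> nat \<Rightarrow> (nat \<Rightarrow> nat \<Rightarrow> complex)" where
  "ract m n P k = (if k = 0 then ccremona m n P else cswap k P)"

text \<open>Right action [P].w for w = s_{a_1} ... s_{a_r}: first s_{a_1}, then s_{a_2}, ...\<close>
definition config_act :: "nat \<Rightarrow> nat \<Rightarrow> (nat \<Rightarrow> nat \<Rightarrow> complex) \<Rightarrow> nat list \<Rightarrow> (nat \<Rightarrow> nat \<Rightarrow> complex)" where
  "config_act m n P ws = foldl (ract m n) P ws"

text \<open>S^w_{i,j}(u) = u_{i,j}([P_u].w), i.e. w(u_{i,j}).\<close>
definition Sw :: "nat \<Rightarrow> nat \<Rightarrow> nat list \<Rightarrow> nat \<Rightarrow> nat \<Rightarrow> (nat \<Rightarrow> nat \<Rightarrow> complex) \<Rightarrow> complex" where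
  "Sw m n ws i j u = ucoord m (config_act m n (normal_config m u) ws) i j"

end

theory Submission
  imports Defs "Jordan_Normal_Form.Determinant" "HOL-Complex_Analysis.Complex_Analysis"
begin

definition toM :: "nat \<Rightarrow> (nat \<Rightarrow> nat \<Rightarrow> complex) \<Rightarrow> complex Matrix.mat" where
  "toM m M = Matrix.mat m m (\<lambda>(r,c). M (Suc r) (Suc c))"

lemma toM_carrier[simp]: "toM m M \<in> carrier_mat m m"
  by (simp add: toM_def)

lemma toM_dims[simp]: "dim_row (toM m M) = m" "dim_col (toM m M) = m"
  by (simp_all add: toM_def)

lemma Suc_img: "Suc ` {0..<m} = {1..m}" "Suc ` {..<m} = {1..m}"
  by (simp_all add: image_Suc_atLeastLessThan atLeastLessThanSuc_atLeastAtMost lessThan_atLeast0)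

lemma toM_index[simp]: "r < m \<Longrightarrow> c < m \<Longrightarrow> toM m M $$ (r,c) = M (Suc r) (Suc c)"
  by (simp add: toM_def)

definition shp :: "nat \<Rightarrow> (nat \<Rightarrow> nat) \<Rightarrow> nat \<Rightarrow> nat" where
  "shp m p = (\<lambda>x. if x \<in> {1..m} then Suc (p (x - 1)) else x)"
definition unshp :: "nat \<Rightarrow> (nat \<Rightarrow> nat) \<Rightarrow> nat \<Rightarrow> nat" where
  "unshp m q = (\<lambda>x. if x \<in> {0..<m} then q (Suc x) - 1 else x)"

lemma shp_perm:
  assumes "p permutes {0..<m}"
  shows "shp m p permutes {1..m}" "sign (shp m p) = sign p"
proof -
  interpret permutes_bij_finite p "{0..<m}" "{1..m}" Suc "\<lambda>x. x - 1" "shp m p"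
    by unfold_locales (use assms in \<open>auto simp: bij_betw_def Suc_img shp_def\<close>)
  show "shp m p permutes {1..m}" using permutes_p' .
  show "sign (shp m p) = sign p" using sign_p' .
qed

lemma unshp_perm:
  assumes "q permutes {1..m}"
  shows "unshp m q permutes {0..<m}"
proof -
  have "bij_betw (\<lambda>x. x - 1) {1..m} {0..<m}"
    by (rule bij_betw_byWitness[where f'=Suc]) auto
  interpret permutes_bij_finite q "{1..m}" "{0..<m}" "\<lambda>x. x - 1" Suc "unshp m q"
    by unfold_locales (use assms \<open>bij_betw (\<lambda>x. x - 1) {1..m} {0..<m}\<close> in \<open>auto simp: unshp_def\<close>)
  show ?thesis using permutes_p' .
qed

lemma detn_det: "detn m M = Determinant.det (toM m M)"
proof -
  have "Determinant.det (toM m M) =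
    (\<Sum>p | p permutes {0..<m}. of_int (sign p) * (\<Prod>i = 0..<m. M (Suc i) (Suc (p i))))"
    unfolding Determinant.det_def
    by (auto intro!: sum.cong prod.cong simp: permutes_in_image)
  also have "\<dots> = detn m M"
    unfolding detn_def
  proof (rule sum.reindex_bij_witness[where i = "unshp m" and j = "shp m"])
    fix p assume p: "p \<in> {p. p permutes {0..<m}}"
    hence pp: "p permutes {0..<m}" by simp
    show "unshp m (shp m p) = p"
    proof
      fix x show "unshp m (shp m p) x = p x"
        using pp permutes_not_in[OF pp, of x] by (auto simp: unshp_def shp_def)
    qed
    show "shp m p \<in> {\<pi>. \<pi> permutes {1..m}}" using shp_perm[OF pp] by simp
    have "(\<Prod>r\<in>{1..m}. M r (shp m p r)) = (\<Prod>i=0..<m. M (Suc i) (shp m p (Suc i)))"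
    proof -
      show ?thesis by (simp add: prod.atLeast1_atMost_eq lessThan_atLeast0)
    qed
    also have "\<dots> = (\<Prod>i=0..<m. M (Suc i) (Suc (p i)))"
      by (rule prod.cong) (auto simp: shp_def)
    finally show "of_int (sign (shp m p)) * (\<Prod>r\<in>{1..m}. M r (shp m p r)) =
       of_int (sign p) * (\<Prod>i = 0..<m. M (Suc i) (Suc (p i)))"
      using shp_perm[OF pp] by simp
  next
    fix q assume q: "q \<in> {\<pi>. \<pi> permutes {1..m}}"
    hence qq: "q permutes {1..m}" by simp
    show "unshp m q \<in> {p. p permutes {0..<m}}" using unshp_perm[OF qq] by simp
    show "shp m (unshp m q) = q"
    proof
      fix x show "shp m (unshp m q) x = q x"
      proof (cases "x \<in> {1..m}")
        case True
        then have "q x \<in> {1..m}" using permutes_in_image[OF qq] by simp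
        then show ?thesis using True by (auto simp: unshp_def shp_def)
      next
        case False then show ?thesis using permutes_not_in[OF qq False] by (auto simp: shp_def)
      qed
    qed
  qed
  finally show ?thesis by simp
qed

lemma detn_cong:
  assumes "\<And>r c. r \<in> {1..m} \<Longrightarrow> c \<in> {1..m} \<Longrightarrow> M r c = M' r c"
  shows "detn m M = detn m M'"
  unfolding detn_def
proof (intro sum.cong refl arg_cong2[where f="(*)"] prod.cong)
  fix p r assume "p \<in> {\<pi>. \<pi> permutes {1..m}}" "r \<in> {1..m}"
  then show "M r (p r) = M' r (p r)" using assms permutes_in_image[of p "{1..m}" r] by auto
qed

definition bmat :: "nat \<Rightarrow> (nat \<Rightarrow> nat \<Rightarrow> complex) \<Rightarrow> nat \<Rightarrow> nat \<Rightarrow> complex" where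
  "bmat m P = (\<lambda>r c. P c r)"

lemma cramer_rep:
  assumes D: "detn m (\<lambda>r c. P c r) \<noteq> 0"
    and q: "\<And>r. r \<in> {1..m} \<Longrightarrow> q r = (\<Sum>k=1..m. x k * P k r)"
    and l: "l \<in> {1..m}"
  shows "bcoord m P l q = x l"
proof -
  let ?A = "toM m (\<lambda>r c. P c r)"
  let ?x = "Matrix.vec m (\<lambda>k. x (Suc k))"
  have xv: "?x \<in> carrier_vec m" by simp
  have l1: "l - 1 < m" using l by auto
  have Ax: "?A *\<^sub>v ?x = Matrix.vec m (\<lambda>r. q (Suc r))"
  proof (rule eq_vecI)
    fix r assume r: "r < dim_vec (Matrix.vec m (\<lambda>r. q (Suc r)))"
    hence r': "r < m" by simp
    have "(?A *\<^sub>v ?x) $ r = (\<Sum>k<m. P (Suc k) (Suc r) * x (Suc k))"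
      using r' by (simp add: scalar_prod_def lessThan_atLeast0)
    also have "\<dots> = (\<Sum>k=1..m. x k * P k (Suc r))"
    proof -
      show ?thesis by (simp add: sum.atLeast1_atMost_eq mult.commute)
    qed
    also have "\<dots> = q (Suc r)" using q[of "Suc r"] r' by simp
    finally show "(?A *\<^sub>v ?x) $ r = Matrix.vec m (\<lambda>r. q (Suc r)) $ r" using r' by simp
  qed (simp)
  have rc: "replace_col ?A (?A *\<^sub>v ?x) (l - 1) = toM m (\<lambda>r c. if c = l then q r else P c r)"
    unfolding Ax
    by (rule eq_matI) (use l in \<open>auto simp: replace_col_def\<close>)
  have "?x $ (l - 1) = x l" using l by auto
  hence "Dl m P l q = x l * detn m (\<lambda>r c. P c r)"
    unfolding Dl_def detn_det
    using cramer_lemma_mat[OF toM_carrier xv l1, of "\<lambda>r c. P c r"] rc l by simp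
  thus ?thesis using D by (simp add: bcoord_def)
qed

lemma cramer_exists:
  assumes D: "detn m (\<lambda>r c. P c r) \<noteq> 0" and r: "r \<in> {1..m}"
  shows "q r = (\<Sum>k=1..m. bcoord m P k q * P k r)"
proof -
  let ?A = "toM m (\<lambda>r c. P c r)"
  have "?A \<in> Units (ring_mat TYPE(complex) m undefined)"
    using det_non_zero_imp_unit[OF toM_carrier] D by (simp add: detn_det)
  then obtain B where B: "B \<in> carrier_mat m m" "?A * B = 1\<^sub>m m"
    unfolding Units_def ring_mat_def by auto
  let ?q = "Matrix.vec m (\<lambda>r. q (Suc r))"
  define xv where "xv = B *\<^sub>v ?q"
  have xvc: "xv \<in> carrier_vec m" using B by (simp add: xv_def)
  have Axv: "?A *\<^sub>v xv = ?q"
    unfolding xv_def using B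
    by (metis assoc_mult_mat_vec carrier_vecI dim_vec one_mult_mat_vec toM_carrier)
  define x where "x = (\<lambda>k. xv $ (k - 1))"
  have rep: "q r' = (\<Sum>k=1..m. x k * P k r')" if r': "r' \<in> {1..m}" for r'
  proof -
    have "r' - 1 < m" "Suc (r' - 1) = r'" using r' by auto
    hence "q r' = (?A *\<^sub>v xv) $ (r' - 1)" using Axv by simp
    also have "\<dots> = (\<Sum>k<m. P (Suc k) r' * xv $ k)"
      using r' xvc by (auto simp add: scalar_prod_def lessThan_atLeast0 intro!: sum.cong)
    also have "\<dots> = (\<Sum>k=1..m. x k * P k r')"
    proof -
      show ?thesis by (simp add: sum.atLeast1_atMost_eq mult.commute x_def)
    qed
    finally show ?thesis .
  qed
  have "\<And>k. k \<in> {1..m} \<Longrightarrow> bcoord m P k q = x k"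
    by (rule cramer_rep[OF D rep]) auto
  then show ?thesis using rep[OF r] by simp
qed

lemma detn_swap:
  assumes k: "1 \<le> k" "k + 1 \<le> m"
  shows "detn m (\<lambda>r c. M r (Transposition.transpose k (k+1) c)) = - detn m M"
proof -
  have "toM m (\<lambda>r c. M r (Transposition.transpose k (k+1) c)) = swapcols (k-1) k (toM m M)"
    by (rule eq_matI) (use k in \<open>auto simp: transpose_def\<close>)
  thus ?thesis unfolding detn_det using det_swapcols[of "k-1" m k "toM m M"] k by simp
qed

lemma bcoord_cong:
  assumes "\<And>c r. c \<in> {1..m} \<Longrightarrow> r \<in> {1..m} \<Longrightarrow> P' c r = P c r"
  shows "bcoord m P' l q = bcoord m P l q"
proof -
  have "detn m (\<lambda>r c. P' c r) = detn m (\<lambda>r c. P c r)"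
    by (rule detn_cong) (simp add: assms)
  moreover have "Dl m P' l q = Dl m P l q"
    unfolding Dl_def by (rule detn_cong) (simp add: assms)
  ultimately show ?thesis by (simp add: bcoord_def)
qed

lemma bcoord_D0: "detn m (\<lambda>r c. P c r) = 0 \<Longrightarrow> bcoord m P l q = 0"
  by (simp add: bcoord_def)

lemma ucoord_nz:
  assumes "ucoord m P i j \<noteq> 0"
  shows "detn m (\<lambda>r c. P c r) \<noteq> 0" "bcoord m P i (P j) \<noteq> 0" "bcoord m P i (P (m+1)) \<noteq> 0"
    "bcoord m P m (P j) \<noteq> 0" "bcoord m P m (P (m+1)) \<noteq> 0"
  using assms by (auto simp: ucoord_def bcoord_D0)

lemma cswap_comp: "cswap k P = P \<circ> Transposition.transpose k (Suc k)"
  by (auto simp: cswap_def transpose_def fun_eq_iff)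

lemma ucoord_cremona:
  assumes D: "detn m (\<lambda>r c. P c r) \<noteq> 0" and j: "j \<in> {m+1..n}" and i: "i \<in> {1..m}"
    and m1: "m + 1 \<le> n" and m: "1 \<le> m"
  shows "ucoord m (ccremona m n P) i j = inverse (ucoord m P i j)"
proof -
  let ?P' = "ccremona m n P"
  have base: "\<And>c. c \<in> {1..m} \<Longrightarrow> ?P' c = P c" by (auto simp: ccremona_def)
  have bc: "bcoord m ?P' l q = bcoord m P l q" for l q
    by (rule bcoord_cong) (simp add: base)
  have new: "bcoord m P l (?P' j') = inverse (bcoord m P l (P j'))"
    if "j' \<in> {m+1..n}" "l \<in> {1..m}" for j' l
    by (rule cramer_rep[OF D _ that(2)]) (use that in \<open>simp add: ccremona_def\<close>)
  have "m \<in> {1..m}" using m by simp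
  show ?thesis unfolding ucoord_def bc
    using new[OF j i] new[OF _ i, of "m+1"] new[OF j \<open>m \<in> {1..m}\<close>] new[OF _ \<open>m \<in> {1..m}\<close>, of "m+1"] m1
    by (simp add: divide_inverse mult_ac)
qed

lemma ucoord_swap_high:
  assumes "m + 2 \<le> k"
  shows "ucoord m (cswap k P) i j = ucoord m P i (Transposition.transpose k (Suc k) j)"
proof -
  have bc: "bcoord m (P \<circ> Transposition.transpose k (Suc k)) l q = bcoord m P l q" for l q
    by (rule bcoord_cong) (use assms in \<open>auto simp: transpose_def\<close>)
  have "Transposition.transpose k (Suc k) (m+1) = m+1" using assms by (auto simp: transpose_def)
  then show ?thesis unfolding ucoord_def cswap_comp bc by simp
qed

lemma ucoord_swap_m1:
  assumes j: "m + 2 \<le> j" and nz: "bcoord m P i (P (m+1)) \<noteq> 0" "bcoord m P m (P (m+1)) \<noteq> 0"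
  shows "ucoord m (cswap (m+1) P) i j =
    (if j = m + 2 then inverse (ucoord m P i (m+2)) else ucoord m P i j / ucoord m P i (m+2))"
proof -
  have bc: "bcoord m (cswap (m+1) P) l q = bcoord m P l q" for l q
    by (rule bcoord_cong) (auto simp: cswap_def)
  show ?thesis unfolding ucoord_def bc using nz j
    by (auto simp: cswap_def field_simps)
qed

lemma bcoord_swap_low:
  assumes D: "detn m (\<lambda>r c. P c r) \<noteq> 0" and k: "1 \<le> k" "k + 1 \<le> m" and l: "l \<in> {1..m}"
  shows "bcoord m (P \<circ> Transposition.transpose k (Suc k)) l q =
         bcoord m P (Transposition.transpose k (Suc k) l) q"
proof -
  let ?s = "Transposition.transpose k (Suc k)"
  have sp: "?s permutes {1..m}" using k by (intro permutes_swap_id) auto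
  have D': "detn m (\<lambda>r c. (P \<circ> ?s) c r) \<noteq> 0"
    using detn_swap[OF k, of "\<lambda>r c. P c r"] D by simp
  have rep: "q r = (\<Sum>l=1..m. bcoord m P (?s l) q * (P \<circ> ?s) l r)" if "r \<in> {1..m}" for r
  proof -
    have "q r = (\<Sum>l=1..m. bcoord m P l q * P l r)" by (rule cramer_exists[OF D that])
    also have "\<dots> = (\<Sum>l=1..m. bcoord m P (?s l) q * P (?s l) r)"
      using sum.permute[OF sp, of "\<lambda>l. bcoord m P l q * P l r"] by (simp add: o_def)
    finally show ?thesis by simp
  qed
  show ?thesis by (rule cramer_rep[OF D' rep l])
qed

lemma ucoord_swap_low:
  assumes D: "detn m (\<lambda>r c. P c r) \<noteq> 0" and k: "1 \<le> k" "k + 2 \<le> m"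
    and i: "i \<in> {1..m}" and j: "m + 1 \<le> j"
  shows "ucoord m (cswap k P) i j = ucoord m P (Transposition.transpose k (Suc k) i) j"
proof -
  have k': "k + 1 \<le> m" using k by simp
  have "m \<in> {1..m}" using k by simp
  moreover have "Transposition.transpose k (Suc k) m = m" using k by (auto simp: transpose_def)
  moreover have "Transposition.transpose k (Suc k) j = j" "Transposition.transpose k (Suc k) (m+1) = m+1"
    using k j by (auto simp: transpose_def)
  ultimately show ?thesis
    unfolding ucoord_def cswap_comp
    using bcoord_swap_low[OF D k(1) k' i] bcoord_swap_low[OF D k(1) k' \<open>m \<in> {1..m}\<close>] by simp
qed

lemma ucoord_swap_mm1:
  assumes D: "detn m (\<lambda>r c. P c r) \<noteq> 0" and m: "2 \<le> m"
    and i: "i \<in> {1..m-1}" and j: "m + 1 \<le> j"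
    and nz: "bcoord m P (m-1) (P j) \<noteq> 0" "bcoord m P (m-1) (P (m+1)) \<noteq> 0"
       "bcoord m P m (P j) \<noteq> 0" "bcoord m P m (P (m+1)) \<noteq> 0"
  shows "ucoord m (cswap (m-1) P) i j =
    (if i = m - 1 then inverse (ucoord m P (m-1) j) else ucoord m P i j / ucoord m P (m-1) j)"
proof -
  have k: "1 \<le> m - 1" "m - 1 + 1 \<le> m" using m by auto
  have sm: "Suc (m-1) = m" "Suc (m - Suc 0) = m" using m by simp_all
  let ?s = "Transposition.transpose (m-1) m"
  have i': "i \<in> {1..m}" "m \<in> {1..m}" using i m by auto
  have fx: "?s j = j" "?s (m+1) = m+1" "?s m = m - 1" using j m by (auto simp: transpose_def)
  have b: "bcoord m (cswap (m-1) P) l q = bcoord m P (?s l) q" if "l \<in> {1..m}" for l q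
    using bcoord_swap_low[OF D k that, of q] unfolding cswap_comp sm by simp
  show ?thesis
  proof (cases "i = m - 1")
    case True
    then have "?s i = m" by (simp add: transpose_def)
    then show ?thesis unfolding ucoord_def using b[OF i'(1)] b[OF i'(2)] fx True nz
      by (simp add: cswap_comp sm field_simps)
  next
    case False
    then have "?s i = i" using i by (auto simp: transpose_def)
    then show ?thesis unfolding ucoord_def using b[OF i'(1)] b[OF i'(2)] fx False nz
      by (simp add: cswap_comp sm field_simps)
  qed
qed

lemma ucoord_swap_m:
  assumes D: "detn m (\<lambda>r c. P c r) \<noteq> 0" and m: "2 \<le> m"
    and i: "i \<in> {1..m-1}" and j: "m + 2 \<le> j"
    and nzb: "bcoord m P m (P (m+1)) \<noteq> 0"
    and nz: "bcoord m P i (P (m+1)) \<noteq> 0" "bcoord m P m (P j) \<noteq> 0"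
  shows "ucoord m (cswap m P) i j = 1 - ucoord m P i j"
proof -
  define P' where "P' = cswap m P"
  define b where "b = (\<lambda>l q. bcoord m P l q)"
  define \<beta> where "\<beta> = b m (P (m+1))"
  have bnz: "\<beta> \<noteq> 0" using nzb by (simp add: \<beta>_def b_def)
  obtain m1 where m1: "m = Suc m1" using m by (cases m) auto
  have P'c: "P' c = (if c = m then P (m+1) else P c)" if "c \<in> {1..m}" for c
    using that by (auto simp: P'_def cswap_def)
  have "detn m (\<lambda>r c. P' c r) = Dl m P m (P (m+1))"
    unfolding Dl_def by (rule detn_cong) (simp add: P'c)
  also have "\<dots> = \<beta> * detn m (\<lambda>r c. P c r)"
    using D by (simp add: \<beta>_def b_def bcoord_def)
  finally have D': "detn m (\<lambda>r c. P' c r) \<noteq> 0" using D bnz by simp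
  define cq where "cq = (\<lambda>q l. if l = m then b m q / \<beta> else b l q - b m q * b l (P (m+1)) / \<beta>)"
  have split: "(\<Sum>l=1..m. f l) = (\<Sum>l=1..m1. f l) + f m" for f :: "nat \<Rightarrow> complex"
    using m1 by (simp add: sum.cl_ivl_Suc)
  have rep: "q r = (\<Sum>l=1..m. cq q l * P' l r)" if r: "r \<in> {1..m}" for q r
  proof -
    have e1: "q r = (\<Sum>l=1..m1. b l q * P l r) + b m q * P m r"
      using cramer_exists[OF D r, of q] split by (simp add: b_def)
    have e2: "P (m+1) r = (\<Sum>l=1..m1. b l (P (m+1)) * P l r) + \<beta> * P m r"
      using cramer_exists[OF D r, of "P (m+1)"] split by (simp add: b_def \<beta>_def)
    have "(\<Sum>l=1..m. cq q l * P' l r) = (\<Sum>l=1..m1. cq q l * P' l r) + cq q m * P' m r"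
      by (rule split)
    also have "(\<Sum>l=1..m1. cq q l * P' l r) = (\<Sum>l=1..m1. (b l q - b m q * b l (P (m+1)) / \<beta>) * P l r)"
      by (rule sum.cong) (auto simp: cq_def P'_def cswap_def m1)
    also have "\<dots> = (\<Sum>l=1..m1. b l q * P l r) - (b m q / \<beta>) * (\<Sum>l=1..m1. b l (P (m+1)) * P l r)"
      by (simp add: sum_subtractf sum_distrib_left algebra_simps)
    also have "cq q m * P' m r = (b m q / \<beta>) * P (m+1) r"
      by (simp add: cq_def P'_def cswap_def)
    finally have eq: "(\<Sum>l=1..m. cq q l * P' l r) = (\<Sum>l=1..m1. b l q * P l r) - (b m q / \<beta>) * (\<Sum>l=1..m1. b l (P (m+1)) * P l r) + (b m q / \<beta>) * P (m+1) r" .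
    show ?thesis unfolding eq e1 e2 using bnz by (simp add: field_simps)
  qed
  have bc: "bcoord m P' l q = cq q l" if "l \<in> {1..m}" for l q
    by (rule cramer_rep[OF D' rep that])
  have Pm: "b l (P m) = (if l = m then 1 else 0)" if "l \<in> {1..m}" for l
    unfolding b_def by (rule cramer_rep[OF D _ that]) (simp add: if_distrib sum.delta' m1)
  have i': "i \<in> {1..m}" "m \<in> {1..m}" "i \<noteq> m" using i m by auto
  have P'j: "P' j = P j" "P' (m+1) = P m" using j by (auto simp: P'_def cswap_def)
  show ?thesis
    unfolding P'_def[symmetric] ucoord_def P'j bc[OF i'(1)] bc[OF i'(2)]
    using nz bnz i'(3) Pm[OF i'(1)] Pm[OF i'(2)] i'(3) \<beta>_def
    by (simp add: cq_def b_def[symmetric] \<beta>_def[symmetric] field_simps)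
qed

definition a0f :: "nat \<Rightarrow> (nat \<Rightarrow> complex) \<Rightarrow> complex" where
  "a0f m e = e 0 - (\<Sum>l=1..m. e l)"

definition NZ :: "(complex \<Rightarrow> complex) \<Rightarrow> nat \<Rightarrow> nat \<Rightarrow> (nat \<Rightarrow> complex) \<Rightarrow> bool" where
  "NZ s m n e \<longleftrightarrow> (\<forall>p\<in>{1..m}. \<forall>q\<in>{m+1..n}. s (e p - e q) \<noteq> 0 \<and> s (a0f m e + (e p - e q)) \<noteq> 0)"

lemma ufun_alt: "ufun s m i j e =
      (s (a0f m e + (e m - e (m+1))) * s (e i - e (m+1))) /
      (s (e m - e (m+1)) * s (a0f m e + (e i - e (m+1)))) *
      ((s (a0f m e + (e i - e j)) * s (e m - e j)) /
       (s (e i - e j) * s (a0f m e + (e m - e j))))"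
  by (simp add: ufun_def a0f_def Let_def)

lemma NZ_D:
  assumes "NZ s m n e" "p \<in> {1..m}" "q \<in> {m+1..n}"
  shows "s (e p - e q) \<noteq> 0" "s (a0f m e + (e p - e q)) \<noteq> 0"
  using assms by (auto simp: NZ_def)

lemma ufun_nz:
  assumes "NZ s m n e" "i \<in> {1..m}" "j \<in> {m+1..n}" "1 \<le> m"
  shows "ufun s m i j e \<noteq> 0"
proof -
  have "m \<in> {1..m}" "m + 1 \<in> {m+1..n}" using assms by auto
  then show ?thesis unfolding ufun_alt
    using NZ_D[OF assms(1)] assms(2,3) by (simp add: NZ_D)
qed

lemma ufun_cremona:
  assumes nz: "NZ s m n e" and i: "i \<in> {1..m}" and j: "j \<in> {m+1..n}" and m: "1 \<le> m"
    and e': "\<And>k. k \<in> {1..m} \<Longrightarrow> e' k = e k + a0f m e"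
    and e'': "\<And>k. m < k \<Longrightarrow> e' k = e k"
    and a0: "a0f m e' = - a0f m e"
  shows "ufun s m i j e' = inverse (ufun s m i j e)"
proof -
  have mm: "m \<in> {1..m}" "m + 1 \<in> {m+1..n}" using i j m by auto
  have jj: "m < j" "m < m + 1" using j by auto
  let ?A = "a0f m e"
  have ar: "a0f m e' + (e' p - e' q) = e p - e q" "e' p - e' q = ?A + (e p - e q)"
    if "p \<in> {1..m}" "m < q" for p q
    using that e' e'' a0 by simp_all
  show ?thesis unfolding ufun_alt ar(1)[OF i jj(1)] ar(1)[OF i jj(2)] ar(1)[OF mm(1) jj(1)] ar(1)[OF mm(1) jj(2)]
    unfolding ar(2)[OF i jj(1)] ar(2)[OF i jj(2)] ar(2)[OF mm(1) jj(1)] ar(2)[OF mm(1) jj(2)]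
    using NZ_D[OF nz i j] NZ_D[OF nz i mm(2)] NZ_D[OF nz mm(1) j] NZ_D[OF nz mm]
    by (simp add: field_simps)
qed

lemma ufun_swap_high:
  assumes "m + 2 \<le> k" and that: "i \<le> m"
  shows "ufun s m i j (e \<circ> Transposition.transpose k (Suc k)) =
         ufun s m i (Transposition.transpose k (Suc k) j) e"
proof -
  let ?s = "Transposition.transpose k (Suc k)"
  have f: "?s l = l" if "l \<le> m + 1" for l using that assms by (auto simp: transpose_def)
  have "a0f m (e \<circ> ?s) = a0f m e" unfolding a0f_def by (simp add: f)
  then show ?thesis unfolding ufun_alt using f[of i] f[of m] f[of "m+1"] that by simp
qed

lemma ufun_swap_m1:
  assumes nz: "NZ s m n e" and i: "i \<in> {1..m}" and j: "j \<in> {m+2..n}" and m: "1 \<le> m"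
  shows "ufun s m i j (e \<circ> Transposition.transpose (m+1) (m+2)) =
    (if j = m + 2 then inverse (ufun s m i (m+2) e) else ufun s m i j e / ufun s m i (m+2) e)"
proof -
  let ?s = "Transposition.transpose (m+1) (m+2)"
  have f: "?s l = l" if "l \<le> m" for l using that by (auto simp: transpose_def)
  have a: "a0f m (e \<circ> ?s) = a0f m e" unfolding a0f_def by (simp add: f)
  have mm: "m \<in> {1..m}" "m + 1 \<in> {m+1..n}" "m + 2 \<in> {m+1..n}" "j \<in> {m+1..n}" using i j m by auto
  show ?thesis
  proof (cases "j = m + 2")
    case True
    then show ?thesis unfolding ufun_alt a using f[of i] f[of m] i
      NZ_D[OF nz i mm(2)] NZ_D[OF nz i mm(3)] NZ_D[OF nz mm(1) mm(2)] NZ_D[OF nz mm(1) mm(3)]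
      by (simp add: field_simps transpose_def)
  next
    case False
    then have "?s j = j" using j by (auto simp: transpose_def)
    then show ?thesis unfolding ufun_alt a using f[of i] f[of m] i False
      NZ_D[OF nz i mm(2)] NZ_D[OF nz i mm(3)] NZ_D[OF nz mm(1) mm(2)] NZ_D[OF nz mm(1) mm(3)]
      NZ_D[OF nz i mm(4)] NZ_D[OF nz mm(1) mm(4)]
      by (simp add: field_simps transpose_def)
  qed
qed

lemma a0f_perm:
  assumes "\<sigma> permutes {1..m}"
  shows "a0f m (e \<circ> \<sigma>) = a0f m e"
proof -
  have "\<sigma> 0 = 0" using permutes_not_in[OF assms, of 0] by simp
  moreover have "(\<Sum>l=1..m. e (\<sigma> l)) = (\<Sum>l=1..m. e l)"
    using sum.permute[OF assms, of e] by (simp add: o_def)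
  ultimately show ?thesis unfolding a0f_def by simp
qed

lemma ufun_swap_low:
  assumes k: "1 \<le> k" "k + 2 \<le> m" and i: "i \<le> m" and j: "m < j"
  shows "ufun s m i j (e \<circ> Transposition.transpose k (Suc k)) =
         ufun s m (Transposition.transpose k (Suc k) i) j e"
proof -
  let ?s = "Transposition.transpose k (Suc k)"
  have sp: "?s permutes {1..m}" using k by (intro permutes_swap_id) auto
  have f: "?s m = m" "?s (m+1) = m+1" "?s j = j" using k j by (auto simp: transpose_def)
  show ?thesis unfolding ufun_alt a0f_perm[OF sp] using f by simp
qed

lemma ufun_swap_mm1:
  assumes nz: "NZ s m n e" and i: "i \<in> {1..m-1}" and j: "j \<in> {m+1..n}" and m: "2 \<le> m"
  shows "ufun s m i j (e \<circ> Transposition.transpose (m-1) m) =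
    (if i = m - 1 then inverse (ufun s m (m-1) j e) else ufun s m i j e / ufun s m (m-1) j e)"
proof -
  let ?s = "Transposition.transpose (m-1) m"
  have sp: "?s permutes {1..m}" using m by (intro permutes_swap_id) auto
  have f: "?s m = m - 1" "?s (m+1) = m+1" "?s j = j" using j m by (auto simp: transpose_def)
  have mm: "m \<in> {1..m}" "m + 1 \<in> {m+1..n}" "m - 1 \<in> {1..m}" "i \<in> {1..m}" using i j m by auto
  show ?thesis
  proof (cases "i = m - 1")
    case True
    then have "?s i = m" by (simp add: transpose_def)
    then show ?thesis unfolding ufun_alt a0f_perm[OF sp] using f True
      NZ_D[OF nz mm(1) mm(2)] NZ_D[OF nz mm(3) mm(2)] NZ_D[OF nz mm(1) j] NZ_D[OF nz mm(3) j]
      by (simp add: field_simps)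
  next
    case False
    then have "?s i = i" using i by (auto simp: transpose_def)
    then show ?thesis unfolding ufun_alt a0f_perm[OF sp] using f False
      NZ_D[OF nz mm(1) mm(2)] NZ_D[OF nz mm(3) mm(2)] NZ_D[OF nz mm(1) j] NZ_D[OF nz mm(3) j]
      NZ_D[OF nz mm(4) mm(2)] NZ_D[OF nz mm(4) j]
      by (simp add: field_simps)
  qed
qed

lemma riemann_three_term:
  assumes R: "riemann_relation s" and odd: "\<forall>z. s (- z) = - s z"
  shows "s (A+q-r) * s (p-r) * s (A+p-t) * s (q-t) - s A * s (p-q) * s (A+q-r+p-t) * s (r-t)
       = s (q-r) * s (A+p-r) * s (p-t) * s (A+q-t)"
proof -
  define x where "x = (A+p+q)/2 - r"
  define y where "y = (A+p+q)/2 - t"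
  define u where "u = (A-p+q)/2"
  define v where "v = (A+p-q)/2"
  have rel: "s (x+y) * s (x-y) * s (u+v) * s (u-v) =
     s (x+u) * s (x-u) * s (y+v) * s (y-v) - s (x+v) * s (x-v) * s (y+u) * s (y-u)"
    using R unfolding riemann_relation_def by blast
  have "x + y = A+q-r+p-t" "x - y = - (r - t)" "u + v = A" "u - v = - (p - q)"
       "x + u = A+q-r" "x - u = p - r" "y + v = A+p-t" "y - v = q - t"
       "x + v = A+p-r" "x - v = q - r" "y + u = A+q-t" "y - u = p - t"
    unfolding x_def y_def u_def v_def by (simp_all add: field_simps)
  note rel' = rel[unfolded this odd[rule_format]]
  have abs: "a * (-b) * c * (-d) = e*f*g*h - i*j*k*l \<Longrightarrow> e*f*g*h - c*d*a*b = j*i*l*k"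
    for a b c d e f g h i j k l :: complex
    by (simp add: algebra_simps)
  show ?thesis by (rule abs[OF rel'])
qed

lemma ufun_swap_m:
  assumes R: "riemann_relation s" and odd: "\<forall>z. s (- z) = - s z"
    and nz: "NZ s m n e" and i: "i \<in> {1..m-1}" and j: "j \<in> {m+2..n}" and m: "2 \<le> m"
  shows "ufun s m i j (e \<circ> Transposition.transpose m (Suc m)) = 1 - ufun s m i j e"
proof -
  let ?s = "Transposition.transpose m (Suc m)"
  obtain m1 where m1: "m = Suc m1" using m by (cases m) auto
  have split: "(\<Sum>l=1..m. f l) = (\<Sum>l=1..m1. f l) + f m" for f :: "nat \<Rightarrow> complex"
    using m1 by (simp add: sum.cl_ivl_Suc)
  have a: "a0f m (e \<circ> ?s) = a0f m e + (e m - e (m+1))"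
  proof -
    have "(\<Sum>l=1..m1. e (?s l)) = (\<Sum>l=1..m1. e l)"
      by (rule sum.cong) (auto simp: transpose_def m1)
    then show ?thesis unfolding a0f_def split[of "\<lambda>l. e (?s l)"] split[of e]
      by (simp add: transpose_def m1)
  qed
  have f: "?s i = i" "?s j = j" "?s m = m + 1" "?s (m+1) = m" using i j m by (auto simp: transpose_def)
  have mm: "m \<in> {1..m}" "m + 1 \<in> {m+1..n}" "i \<in> {1..m}" "j \<in> {m+1..n}" using i j m by auto
  define A where "A = a0f m e"
  define p where "p = e i"
  define q where "q = e m"
  define r where "r = e (m+1)"
  define t where "t = e j"
  have n1: "s (q - r) \<noteq> 0" "s (A + (q - r)) \<noteq> 0" "s (p - r) \<noteq> 0" "s (A + (p - r)) \<noteq> 0"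
       "s (p - t) \<noteq> 0" "s (A + (p - t)) \<noteq> 0" "s (q - t) \<noteq> 0" "s (A + (q - t)) \<noteq> 0"
    using NZ_D[OF nz mm(1) mm(2)] NZ_D[OF nz mm(3) mm(2)] NZ_D[OF nz mm(1) mm(4)] NZ_D[OF nz mm(3) mm(4)]
    by (simp_all add: A_def p_def q_def r_def t_def)
  have lhs0: "ufun s m i j (e \<circ> ?s) =
      (s (A + (q - r) + (r - q)) * s (p - q)) / (s (r - q) * s (A + (q - r) + (p - q))) *
      ((s (A + (q - r) + (p - t)) * s (r - t)) / (s (p - t) * s (A + (q - r) + (r - t))))"
    unfolding ufun_alt a unfolding o_def f A_def p_def q_def r_def t_def ..
  have sn: "s (r - q) = - s (q - r)" using odd[rule_format, of "q - r"] by simp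
  have eqs: "A + (q - r) + (r - q) = A" "A + (q - r) + (p - q) = A + p - r"
      "A + (q - r) + (p - t) = A+q-r+p-t" "A + (q - r) + (r - t) = A + q - t" by simp_all
  have lhs: "ufun s m i j (e \<circ> ?s) =
      (s A * s (p - q)) / (- s (q - r) * s (A + p - r)) * ((s (A+q-r+p-t) * s (r - t)) / (s (p - t) * s (A + q - t)))"
    unfolding lhs0 sn eqs ..
  have eqs2: "A + (q - r) = A + q - r" "A + (p - r) = A + p - r" "A + (p - t) = A + p - t" "A + (q - t) = A + q - t"
    by simp_all
  have rhs: "ufun s m i j e =
      (s (A + q - r) * s (p - r)) / (s (q - r) * s (A + p - r)) * ((s (A+p-t) * s (q - t)) / (s (p - t) * s (A + q - t)))"
    unfolding ufun_alt A_def[symmetric] p_def[symmetric] q_def[symmetric] r_def[symmetric] t_def[symmetric]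
    unfolding eqs2 ..
  have n2: "s (A + q - r) \<noteq> 0" "s (A + p - r) \<noteq> 0" "s (A + p - t) \<noteq> 0" "s (A + q - t) \<noteq> 0"
    using n1 by (simp_all add: add_diff_eq)
  have T: "s (A+q-r) * s (p-r) * s (A+p-t) * s (q-t) - s A * s (p-q) * s (A+q-r+p-t) * s (r-t)
       = s (q-r) * s (A+p-r) * s (p-t) * s (A+q-t)" by (rule riemann_three_term[OF R odd])
  have abs: "E*F*G*H - C*D*X*Y = J*I*L*K \<Longrightarrow> J \<noteq> 0 \<Longrightarrow> I \<noteq> 0 \<Longrightarrow> L \<noteq> 0 \<Longrightarrow> K \<noteq> 0 \<Longrightarrow>
      (C * D) / (- J * I) * ((X * Y) / (L * K)) = 1 - (E * F) / (J * I) * ((G * H) / (L * K))"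
    for C D X Y E F G H I J K L :: complex
    by (simp add: field_simps)
  show ?thesis unfolding lhs rhs
    by (rule abs[OF T]) (use n1 n2 in auto)
qed

definition Lw :: "nat \<Rightarrow> nat \<Rightarrow> nat list \<Rightarrow> (nat \<Rightarrow> complex) \<Rightarrow> nat \<Rightarrow> complex" where
  "Lw m n ws x = (\<lambda>k. pairing n (wact m n ws (epsf m k)) x)"

lemma pairing_add: "pairing n (\<lambda>j. f j + g j) x = pairing n f x + pairing n g x"
  by (simp add: pairing_def sum.distrib algebra_simps)
lemma pairing_diff: "pairing n (\<lambda>j. f j - g j) x = pairing n f x - pairing n g x"
  by (simp add: pairing_def sum_subtractf algebra_simps)
lemma pairing_smult: "pairing n (\<lambda>j. c * f j) x = c * pairing n f x"
  by (simp add: pairing_def sum_distrib_left algebra_simps)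
lemma pairing_sum: "pairing n (\<lambda>j. \<Sum>l\<in>S. f l j) x = (\<Sum>l\<in>S. pairing n (f l) x)"
  by (simp add: pairing_def sum_distrib_right sum.swap[of _ S])
lemma pairing_zero: "pairing n (\<lambda>j. 0) x = 0"
  by (simp add: pairing_def)

lemma srefl_add: "srefl m n a (\<lambda>j. f j + g j) = (\<lambda>j. srefl m n a f j + srefl m n a g j)"
  by (simp add: srefl_def pairing_add fun_eq_iff algebra_simps)
lemma srefl_smult: "srefl m n a (\<lambda>j. c * f j) = (\<lambda>j. c * srefl m n a f j)"
  by (simp add: srefl_def pairing_smult fun_eq_iff algebra_simps)

lemma wact_add: "wact m n ws (\<lambda>j. f j + g j) = (\<lambda>j. wact m n ws f j + wact m n ws g j)"
  by (induction ws) (simp_all add: wact_def srefl_add)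
lemma wact_smult: "wact m n ws (\<lambda>j. c * f j) = (\<lambda>j. c * wact m n ws f j)"
  by (induction ws) (simp_all add: wact_def srefl_smult)
lemma wact_zero: "wact m n ws (\<lambda>j. 0) = (\<lambda>j. 0)"
  using wact_smult[of m n ws 0 "\<lambda>j. 0"] by simp
lemma wact_diff: "wact m n ws (\<lambda>j. f j - g j) = (\<lambda>j. wact m n ws f j - wact m n ws g j)"
  using wact_add[of m n ws f "\<lambda>j. (-1) * g j"] wact_smult[of m n ws "-1" g] by simp
lemma wact_sum:
  assumes "finite S"
  shows "wact m n ws (\<lambda>j. \<Sum>l\<in>S. f l j) = (\<lambda>j. \<Sum>l\<in>S. wact m n ws (f l) j)"
  using assms
proof (induction S rule: finite_induct)
  case empty then show ?case by (simp add: wact_zero)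
next
  case (insert a S)
  then show ?case using wact_add[of m n ws "f a" "\<lambda>j. \<Sum>l\<in>S. f l j"] by simp
qed

lemma wact_snoc: "wact m n (ws @ [a]) f = wact m n ws (srefl m n a f)"
  by (simp add: wact_def)

lemma pairing_epsf: "pairing n (epsf m k) v = (if k \<le> n then gram m k * v k else 0)"
  by (simp add: pairing_def epsf_def if_distrib[of "\<lambda>x. x * _"] sum.delta' cong: if_cong)

lemma srefl_epsf_swap:
  assumes a: "1 \<le> a" "a + 1 \<le> n"
  shows "srefl m n a (epsf m k) = epsf m (Transposition.transpose a (Suc a) k)"
proof -
  have "pairing n (epsf m k) (hvec m a) = gram m k * hvec m a k"
    using a by (auto simp: pairing_epsf hvec_def)
  then show ?thesis using a
    by (auto simp: srefl_def fun_eq_iff epsf_def alpha_def hvec_def gram_def transpose_def)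
qed

lemma Lw_snoc_swap:
  assumes a: "1 \<le> a" "a + 1 \<le> n"
  shows "Lw m n (ws @ [a]) x = Lw m n ws x \<circ> Transposition.transpose a (Suc a)"
  by (simp add: Lw_def wact_snoc srefl_epsf_swap[OF a] fun_eq_iff)

definition gam :: "nat \<Rightarrow> nat \<Rightarrow> complex" where
  "gam m k = (if k = 0 then - (of_nat m - 2) else if k \<in> {1..m} then -1 else 0)"

lemma alpha0: "alpha m 0 = (\<lambda>j. epsf m 0 j - (\<Sum>l=1..m. epsf m l j))"
proof
  fix j
  have "(\<Sum>l=1..m. epsf m l j) = (if j \<in> {1..m} then 1 else 0)"
    by (simp add: epsf_def gram_def sum.delta cong: if_cong) 
  then show "alpha m 0 j = epsf m 0 j - (\<Sum>l=1..m. epsf m l j)"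
    by (auto simp: alpha_def hvec_def epsf_def gram_def)
qed

lemma srefl_epsf_0:
  assumes "m < n"
  shows "srefl m n 0 (epsf m k) = (\<lambda>j. epsf m k j - gam m k * (epsf m 0 j - (\<Sum>l=1..m. epsf m l j)))"
proof -
  have "pairing n (epsf m k) (hvec m 0) = gam m k"
    using assms by (auto simp: pairing_epsf hvec_def gram_def gam_def)
  then show ?thesis by (simp add: srefl_def alpha0)
qed

lemma Lw_snoc_0:
  assumes "m < n"
  shows "Lw m n (ws @ [0]) x k = Lw m n ws x k - gam m k * a0f m (Lw m n ws x)"
  unfolding Lw_def wact_snoc srefl_epsf_0[OF assms] wact_diff wact_smult wact_sum[OF finite_atLeastAtMost]
    pairing_diff pairing_smult pairing_sum a0f_def ..

lemma a0f_snoc_0: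
  assumes "m < n"
  shows "a0f m (Lw m n (ws @ [0]) x) = - a0f m (Lw m n ws x)"
proof -
  let ?e = "Lw m n ws x"
  let ?A = "a0f m ?e"
  have "(\<Sum>l=1..m. Lw m n (ws @ [0]) x l) = (\<Sum>l=1..m. ?e l + ?A)"
    by (rule sum.cong) (auto simp: Lw_snoc_0[OF assms] gam_def)
  also have "\<dots> = (\<Sum>l=1..m. ?e l) + of_nat m * ?A" by (simp add: sum.distrib)
  finally show ?thesis
    unfolding a0f_def[of m "Lw m n (ws @ [0]) x"] Lw_snoc_0[OF assms, of ws x 0]
    by (simp add: gam_def a0f_def algebra_simps)
qed

lemma wact_nil: "wact m n [] f = f" by (simp add: wact_def)

lemma ucoord_normal:
  assumes m: "1 \<le> m" and i: "i \<in> {1..m-1}" and j: "m + 1 < j"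
  shows "ucoord m (normal_config m u) i j = u i j"
proof -
  let ?P = "normal_config m u"
  have "toM m (\<lambda>r c. ?P c r) = 1\<^sub>m m"
    by (rule eq_matI) (auto simp: normal_config_def)
  hence D: "detn m (\<lambda>r c. ?P c r) = 1" by (simp add: detn_det)
  have bc: "bcoord m ?P l q = q l" if "l \<in> {1..m}" for l q
  proof (rule cramer_rep[of m ?P q q l])
    show "detn m (\<lambda>r c. ?P c r) \<noteq> 0" using D by simp
    show "l \<in> {1..m}" by fact
    fix r assume r: "r \<in> {1..m}"
    have "(\<Sum>k=1..m. q k * ?P k r) = (\<Sum>k=1..m. if k = r then q k else 0)"
      by (rule sum.cong) (auto simp: normal_config_def)
    also have "\<dots> = q r" using r by (simp add: sum.delta)
    finally show "q r = (\<Sum>k=1..m. q k * ?P k r)" by simp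
  qed
  have ii: "i \<in> {1..m}" "m \<in> {1..m}" "i \<noteq> m" using i m by auto
  show ?thesis unfolding ucoord_def bc[OF ii(1)] bc[OF ii(2)]
    using j ii(3) by (simp add: normal_config_def)
qed

definition Cx :: "(complex \<Rightarrow> complex) \<Rightarrow> nat \<Rightarrow> nat \<Rightarrow> (nat \<Rightarrow> complex) \<Rightarrow> nat \<Rightarrow> nat \<Rightarrow> complex" where
  "Cx s m n x = normal_config m (\<lambda>a b. ufun s m a b (Lw m n [] x))"

lemma config_act_snoc: "config_act m n P (ws @ [a]) = ract m n (config_act m n P ws) a"
  by (simp add: config_act_def)

lemma invariant:
  assumes m3: "3 \<le> m" and mn: "m + 2 \<le> n" and R: "riemann_relation s" and odd: "\<forall>z. s (- z) = - s z"
  shows "set ws \<subseteq> {..<n} \<Longrightarrow> (\<forall>k\<le>length ws. NZ s m n (Lw m n (take k ws) x)) \<Longrightarrow>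
    \<forall>i\<in>{1..m-1}. \<forall>j\<in>{m+2..n}. ucoord m (config_act m n (Cx s m n x) ws) i j = ufun s m i j (Lw m n ws x)"
proof (induction ws rule: rev_induct)
  case Nil
  then show ?case using m3 by (auto simp: config_act_def Cx_def intro!: ucoord_normal)
next
  case (snoc a ws)
  define Q where "Q = config_act m n (Cx s m n x) ws"
  define e where "e = Lw m n ws x"
  have an: "a < n" using snoc.prems(1) by simp
  have nzall: "\<forall>k\<le>length ws. NZ s m n (Lw m n (take k ws) x)"
  proof (intro allI impI)
    fix k assume k: "k \<le> length ws"
    have "take k (ws @ [a]) = take k ws" using k by simp
    then show "NZ s m n (Lw m n (take k ws) x)" using snoc.prems(2) k by (metis le_SucI length_append_singleton)
  qed
  have H: "\<And>i j. i\<in>{1..m-1} \<Longrightarrow> j\<in>{m+2..n} \<Longrightarrow> ucoord m Q i j = ufun s m i j e"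
    using snoc.IH snoc.prems(1) nzall by (simp add: Q_def e_def)
  have nze: "NZ s m n e" using snoc.prems(2)[rule_format, of "length ws"] by (simp add: e_def)
  have nze': "NZ s m n (Lw m n (ws @ [a]) x)" using snoc.prems(2)[rule_format, of "length ws + 1"] by simp
  have Unz: "ucoord m Q i j \<noteq> 0" if "i\<in>{1..m-1}" "j\<in>{m+2..n}" for i j
  proof -
    have "i \<in> {1..m}" "j \<in> {m+1..n}" "1 \<le> m" using that m3 by auto
    then show ?thesis using H[OF that] ufun_nz[OF nze] by metis
  qed
  have D: "detn m (\<lambda>r c. Q c r) \<noteq> 0"
    using ucoord_nz(1)[OF Unz[of 1 "m+2"]] m3 mn by auto
  have act: "config_act m n (Cx s m n x) (ws @ [a]) = ract m n Q a"
    by (simp add: config_act_snoc Q_def)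
  show ?case
  proof (intro ballI)
    fix i j assume i: "i \<in> {1..m-1}" and j: "j \<in> {m+2..n}"
    have i': "i \<in> {1..m}" and j': "j \<in> {m+1..n}" using i j by auto
    note nzij = ucoord_nz[OF Unz[OF i j]]
    show "ucoord m (config_act m n (Cx s m n x) (ws @ [a])) i j = ufun s m i j (Lw m n (ws @ [a]) x)"
    proof (cases "a = 0")
      case True
      have "ucoord m (ract m n Q a) i j = inverse (ufun s m i j e)"
        using ucoord_cremona[OF D j' i'] H[OF i j] True mn m3 by (simp add: ract_def)
      also have "\<dots> = ufun s m i j (Lw m n (ws @ [a]) x)"
        unfolding True
        by (rule ufun_cremona[OF nze i' j', symmetric])
           (use m3 mn in \<open>auto simp: Lw_snoc_0 a0f_snoc_0 gam_def e_def\<close>)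
      finally show ?thesis by (simp add: act)
    next
      case False
      have a1: "1 \<le> a" "a + 1 \<le> n" using False an by auto
      have e': "Lw m n (ws @ [a]) x = e \<circ> Transposition.transpose a (Suc a)"
        using Lw_snoc_swap[OF a1] by (simp add: e_def)
      have ra: "ract m n Q a = cswap a Q" using False by (simp add: ract_def)
      consider "a + 2 \<le> m" | "a = m - 1" | "a = m" | "a = m + 1" | "m + 2 \<le> a" using a1 m3 by linarith
      then show ?thesis
      proof cases
        case 1
        let ?s = "Transposition.transpose a (Suc a)"
        have si: "?s i \<in> {1..m-1}" using i 1 a1 by (auto simp: Transposition.transpose_def)
        have "ucoord m (cswap a Q) i j = ucoord m Q (?s i) j"
          using ucoord_swap_low[OF D a1(1) 1 i'] j by simp
        also have "\<dots> = ufun s m (?s i) j e" by (rule H[OF si j])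
        also have "\<dots> = ufun s m i j (e \<circ> ?s)"
        proof -
          have "i \<le> m" "m < j" using i j by auto
          then show ?thesis using ufun_swap_low[OF a1(1) 1] by metis
        qed
        finally show ?thesis by (simp add: act ra e')
      next
        case 2
        have sa: "Suc a = m" using 2 m3 by simp
        have mi: "m - 1 \<in> {1..m-1}" using m3 by simp
        note nzm = ucoord_nz[OF Unz[OF mi j]]
        have "ucoord m (cswap a Q) i j =
          (if i = m - 1 then inverse (ucoord m Q (m-1) j) else ucoord m Q i j / ucoord m Q (m-1) j)"
          unfolding 2 using ucoord_swap_mm1[OF D _ i _ nzm(2,3,4,5)] m3 j by simp
        also have "\<dots> = (if i = m - 1 then inverse (ufun s m (m-1) j e) else ufun s m i j e / ufun s m (m-1) j e)"
          using H[OF i j] H[OF mi j] by simp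
        also have "\<dots> = ufun s m i j (e \<circ> Transposition.transpose (m-1) m)"
          using ufun_swap_mm1[OF nze i j'] m3 by simp
        finally have X: "ucoord m (cswap a Q) i j = ufun s m i j (e \<circ> Transposition.transpose (m-1) m)" .
        have tr: "Transposition.transpose a (Suc a) = Transposition.transpose (m-1) m" using sa 2 by simp
        show ?thesis unfolding act ra e' tr using X .
      next
        case 3
        have "ucoord m (cswap a Q) i j = 1 - ucoord m Q i j"
          unfolding 3 using ucoord_swap_m[OF D _ i _ nzij(5) nzij(3) nzij(4)] m3 j by simp
        also have "\<dots> = 1 - ufun s m i j e" using H[OF i j] by simp
        also have "\<dots> = ufun s m i j (e \<circ> Transposition.transpose m (Suc m))"
          using ufun_swap_m[OF R odd nze i j] m3 by simp
        finally show ?thesis unfolding act ra e' using 3 by simp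
      next
        case 4
        have m2: "m + 2 \<in> {m+2..n}" using mn by simp
        have "ucoord m (cswap a Q) i j =
          (if j = m + 2 then inverse (ucoord m Q i (m+2)) else ucoord m Q i j / ucoord m Q i (m+2))"
          unfolding 4 using ucoord_swap_m1[OF _ nzij(3) nzij(5)] j by simp
        also have "\<dots> = (if j = m + 2 then inverse (ufun s m i (m+2) e) else ufun s m i j e / ufun s m i (m+2) e)"
          using H[OF i j] H[OF i m2] by simp
        also have "\<dots> = ufun s m i j (e \<circ> Transposition.transpose (m+1) (m+2))"
          using ufun_swap_m1[OF nze i' j] m3 by simp
        finally show ?thesis unfolding act ra e' using 4 by simp
      next
        case 5
        let ?s = "Transposition.transpose a (Suc a)"
        have sj: "?s j \<in> {m+2..n}" using j 5 a1 by (auto simp: Transposition.transpose_def)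
        have "ucoord m (cswap a Q) i j = ucoord m Q i (?s j)"
          using ucoord_swap_high[OF 5] by simp
        also have "\<dots> = ufun s m i (?s j) e" by (rule H[OF i sj])
        also have "\<dots> = ufun s m i j (e \<circ> ?s)"
        proof -
          have "i \<le> m" using i by auto
          then show ?thesis using ufun_swap_high[OF 5] by metis
        qed
        finally show ?thesis by (simp add: act ra e')
      qed
    qed
  qed
qed

lemma pairing_local: "(\<And>j. j \<le> n \<Longrightarrow> f j = g j) \<Longrightarrow> pairing n f x = pairing n g x"
  by (simp add: pairing_def)

lemma srefl_local:
  assumes "\<And>j. j \<le> n \<Longrightarrow> f j = g j" "j \<le> n"
  shows "srefl m n a f j = srefl m n a g j"
  using assms pairing_local[of n f g] by (simp add: srefl_def)

lemma wact_local:
  assumes "\<And>j. j \<le> n \<Longrightarrow> f j = g j"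
  shows "j \<le> n \<Longrightarrow> wact m n ws f j = wact m n ws g j"
proof (induction ws arbitrary: j)
  case Nil then show ?case using assms by (simp add: wact_def)
next
  case (Cons a ws)
  then show ?case using srefl_local[of n "wact m n ws f" "wact m n ws g" j m a]
    by (simp add: wact_def)
qed

lemma pairing_alpha_hvec:
  assumes "a < n" "m < n"
  shows "pairing n (alpha m a) (hvec m a) = 2"
proof (cases "a = 0")
  case True
  have "pairing n (alpha m a) (hvec m a) = (\<Sum>j\<le>n. (if j = 0 then gram m 0 else 0) + (if j \<in> {1..m} then 1 else 0))"
    unfolding pairing_def by (rule sum.cong) (auto simp: True alpha_def hvec_def gram_def)
  also have "\<dots> = (\<Sum>j\<le>n. (if j = 0 then gram m 0 else 0)) + (\<Sum>j\<le>n. (if j \<in> {1..m} then 1 else 0))"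
    by (rule sum.distrib)
  also have "(\<Sum>j\<le>n. (if j = 0 then gram m 0 else 0)) = gram m 0"
    by (simp add: sum.delta)
  also have "(\<Sum>j\<le>n. (if j \<in> {1..m} then (1::complex) else 0)) = (\<Sum>j\<in>{..n} \<inter> {1..m}. 1)"
    by (rule sum.inter_restrict[symmetric]) simp
  also have "{..n} \<inter> {1..m} = {1..m}" using assms by auto
  finally show ?thesis by (simp add: gram_def)
next
  case False
  have "pairing n (alpha m a) (hvec m a) = (\<Sum>j\<le>n. (if j = a then 1 else 0) + (if j = Suc a then 1 else 0))"
    unfolding pairing_def by (rule sum.cong) (use False in \<open>auto simp: alpha_def hvec_def gram_def\<close>)
  also have "\<dots> = 2" using assms by (simp add: sum.distrib)
  finally show ?thesis .
qed

lemma srefl_invol: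
  assumes "a < n" "m < n"
  shows "srefl m n a (srefl m n a f) = f"
proof -
  define c where "c = pairing n f (hvec m a)"
  have "srefl m n a f = (\<lambda>j. f j - c * alpha m a j)" by (simp add: srefl_def c_def)
  moreover have "pairing n (\<lambda>j. f j - c * alpha m a j) (hvec m a) = - c"
    using pairing_alpha_hvec[OF assms] by (simp add: pairing_diff pairing_smult c_def)
  ultimately have "srefl m n a (srefl m n a f) = (\<lambda>j. (f j - c * alpha m a j) - (- c) * alpha m a j)"
    by (simp add: srefl_def)
  then show ?thesis by (simp add: fun_eq_iff)
qed

lemma wact_rev:
  assumes "set ws \<subseteq> {..<n}" "m < n"
  shows "wact m n (rev ws) (wact m n ws f) = f"
  using assms(1)
proof (induction ws)
  case Nil then show ?case by (simp add: wact_def)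
next
  case (Cons a ws)
  have "wact m n (rev (a # ws)) (wact m n (a # ws) f) = wact m n (rev ws) (srefl m n a (srefl m n a (wact m n ws f)))"
    by (simp add: wact_snoc) (simp add: wact_def)
  also have "\<dots> = wact m n (rev ws) (wact m n ws f)"
    using Cons.prems assms(2) by (simp add: srefl_invol)
  finally show ?case using Cons by simp
qed

lemma wact_nonzero:
  assumes "set ws \<subseteq> {..<n}" "m < n" "j0 \<le> n" "f j0 \<noteq> 0"
  shows "\<exists>j\<le>n. wact m n ws f j \<noteq> 0"
proof (rule ccontr)
  assume "\<not> ?thesis"
  then have z: "\<And>j. j \<le> n \<Longrightarrow> wact m n ws f j = (\<lambda>j. 0) j" by simp
  have "f j0 = wact m n (rev ws) (wact m n ws f) j0" using wact_rev[OF assms(1,2)] by simp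
  also have "\<dots> = wact m n (rev ws) (\<lambda>j. 0) j0" by (rule wact_local[OF z assms(3)])
  also have "\<dots> = 0" by (simp add: wact_zero)
  finally show False using assms(4) by simp
qed

lemma open_dense_single:
  fixes s :: "complex \<Rightarrow> complex"
  assumes hol: "s holomorphic_on UNIV" and nz: "\<exists>z. s z \<noteq> 0" and j0: "j0 \<le> n" "lam j0 \<noteq> 0"
  shows "openin (top_of_set (hspace n)) {x \<in> hspace n. s (pairing n lam x) \<noteq> 0}"
    "hspace n \<subseteq> closure {x \<in> hspace n. s (pairing n lam x) \<noteq> 0}"
proof -
  let ?U = "{x \<in> hspace n. s (pairing n lam x) \<noteq> 0}"
  have cp: "continuous_on UNIV (\<lambda>x::nat\<Rightarrow>complex. pairing n lam x)"
    unfolding pairing_def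
    by (intro continuous_on_sum continuous_on_mult continuous_on_const continuous_on_product_coordinates)
  have cs: "continuous_on UNIV s" using hol by (rule holomorphic_on_imp_continuous_on)
  have cf: "continuous_on (hspace n) (\<lambda>x. s (pairing n lam x))"
    by (rule continuous_on_subset[OF continuous_on_compose2[OF cs cp]]) auto
  have "openin (top_of_set (hspace n)) (hspace n \<inter> (\<lambda>x. s (pairing n lam x)) -` (- {0}))"
    by (rule continuous_openin_preimage_gen[OF cf]) auto
  moreover have "hspace n \<inter> (\<lambda>x. s (pairing n lam x)) -` (- {0}) = ?U" by auto
  ultimately show "openin (top_of_set (hspace n)) ?U" by simp
  show "hspace n \<subseteq> closure ?U"
  proof
    fix x0 assume x0: "x0 \<in> hspace n"
    show "x0 \<in> closure ?U"
      unfolding closure_iff_nhds_not_empty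
    proof (intro allI impI)
      fix A S assume SA: "S \<subseteq> A" and S: "open S" and xS: "x0 \<in> S"
      define g where "g = (\<lambda>t::complex. \<lambda>j. x0 j + (if j = j0 then t else 0))"
      have cg: "continuous_on UNIV g"
        unfolding g_def
      proof (rule continuous_on_coordinatewise_then_product)
        fix i show "continuous_on UNIV (\<lambda>t::complex. x0 i + (if i = j0 then t else 0))"
          by (cases "i = j0") (auto intro!: continuous_intros)
      qed
      have "open (g -` S \<inter> UNIV)" using continuous_on_open_vimage[OF open_UNIV] cg S by blast
      then have "open (g -` S)" by simp
      moreover have "0 \<in> g -` S" using xS by (simp add: g_def)
      ultimately obtain \<epsilon> where \<epsilon>: "\<epsilon> > 0" "ball 0 \<epsilon> \<subseteq> g -` S"
        using open_contains_ball by blast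
      define c where "c = pairing n lam x0"
      have pg: "pairing n lam (g t) = c + lam j0 * t" for t
      proof -
        have "pairing n lam (g t) = (\<Sum>j\<le>n. lam j * x0 j + (if j = j0 then lam j0 * t else 0))"
          unfolding pairing_def g_def by (rule sum.cong) (auto simp: algebra_simps)
        also have "\<dots> = c + lam j0 * t"
          using j0 by (simp add: sum.distrib c_def pairing_def sum.delta)
        finally show ?thesis .
      qed
      have gH: "g t \<in> hspace n" for t using x0 j0 by (auto simp: hspace_def g_def)
      have "\<exists>t\<in>ball 0 \<epsilon>. s (c + lam j0 * t) \<noteq> 0"
      proof (rule ccontr)
        assume "\<not> ?thesis"
        then have z: "\<And>t. t \<in> ball 0 \<epsilon> \<Longrightarrow> s (c + lam j0 * t) = 0" by blast
        define r where "r = \<epsilon> * norm (lam j0)"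
        have r: "r > 0" using \<epsilon> j0 by (simp add: r_def)
        have zb: "s w = 0" if "w \<in> ball c r" for w
        proof -
          have "(w - c) / lam j0 \<in> ball 0 \<epsilon>"
            using that j0 by (simp add: dist_norm norm_divide r_def divide_less_eq norm_minus_commute)
          then have "s (c + lam j0 * ((w - c) / lam j0)) = 0" by (rule z)
          then show ?thesis using j0 by simp
        qed
        have "\<And>w. s w = 0"
          by (rule analytic_continuation[OF hol open_UNIV connected_UNIV subset_UNIV, of c "ball c r"])
             (use r zb in \<open>auto simp: islimpt_ball\<close>)
        then show False using nz by blast
      qed
      then obtain t where t: "t \<in> ball 0 \<epsilon>" "s (c + lam j0 * t) \<noteq> 0" by blast
      have "g t \<in> ?U \<inter> A" using t \<epsilon>(2) SA gH pg by auto
      then show "?U \<inter> A \<noteq> {}" by blast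
    qed
  qed
qed



lemma open_dense_inter:
  assumes "openin (top_of_set H) U1" "H \<subseteq> closure U1" "openin (top_of_set H) U2" "H \<subseteq> closure U2"
  shows "openin (top_of_set H) (U1 \<inter> U2)" "H \<subseteq> closure (U1 \<inter> U2)"
proof -
  show "openin (top_of_set H) (U1 \<inter> U2)" using assms(1,3) by (rule openin_Int)
  obtain O1 where O1: "open O1" "U1 = H \<inter> O1" using assms(1) by (auto simp: openin_open)
  have U2H: "U2 \<subseteq> H" using assms(3) by (rule openin_subset[of "top_of_set H", simplified])
  show "H \<subseteq> closure (U1 \<inter> U2)"
  proof
    fix x assume x: "x \<in> H"
    show "x \<in> closure (U1 \<inter> U2)"
      unfolding closure_iff_nhds_not_empty
    proof (intro allI impI)
      fix A S assume SA: "S \<subseteq> A" and S: "open S" and xS: "x \<in> S"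
      have "x \<in> closure U1" using x assms(2) by auto
      then obtain y where y: "y \<in> U1" "y \<in> S"
        unfolding closure_iff_nhds_not_empty using S xS by blast
      have "y \<in> closure U2" using y O1 assms(4) by auto
      moreover have "open (S \<inter> O1)" using S O1 by auto
      moreover have "y \<in> S \<inter> O1" using y O1 by auto
      ultimately obtain z where "z \<in> U2" "z \<in> S \<inter> O1"
        unfolding closure_iff_nhds_not_empty by blast
      then have "z \<in> U1 \<inter> U2 \<inter> A" using U2H O1 SA by auto
      then show "U1 \<inter> U2 \<inter> A \<noteq> {}" by blast
    qed
  qed
qed

lemma open_dense_finite:
  fixes s :: "complex \<Rightarrow> complex"
  assumes hol: "s holomorphic_on UNIV" and nz: "\<exists>z. s z \<noteq> 0"
    and fin: "finite \<Lambda>" and lz: "\<And>lam. lam \<in> \<Lambda> \<Longrightarrow> \<exists>j\<le>n. lam j \<noteq> 0"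
  shows "openin (top_of_set (hspace n)) {x \<in> hspace n. \<forall>lam\<in>\<Lambda>. s (pairing n lam x) \<noteq> 0} \<and>
         hspace n \<subseteq> closure {x \<in> hspace n. \<forall>lam\<in>\<Lambda>. s (pairing n lam x) \<noteq> 0}"
  using fin lz
proof (induction \<Lambda> rule: finite_induct)
  case empty
  then show ?case by (simp add: closure_subset)
next
  case (insert lam \<Lambda>)
  obtain j0 where j0: "j0 \<le> n" "lam j0 \<noteq> 0" using insert.prems by blast
  have eq: "{x \<in> hspace n. \<forall>l\<in>insert lam \<Lambda>. s (pairing n l x) \<noteq> 0} =
     {x \<in> hspace n. s (pairing n lam x) \<noteq> 0} \<inter> {x \<in> hspace n. \<forall>l\<in>\<Lambda>. s (pairing n l x) \<noteq> 0}"
    by auto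
  have IH: "openin (top_of_set (hspace n)) {x \<in> hspace n. \<forall>l\<in>\<Lambda>. s (pairing n l x) \<noteq> 0} \<and>
         hspace n \<subseteq> closure {x \<in> hspace n. \<forall>l\<in>\<Lambda>. s (pairing n l x) \<noteq> 0}"
    using insert.IH insert.prems by blast
  show ?case unfolding eq
    using open_dense_inter[OF open_dense_single(1)[of s j0 n lam, OF hol nz j0] open_dense_single(2)[of s j0 n lam, OF hol nz j0] IH[THEN conjunct1] IH[THEN conjunct2]]
    by blast
qed

definition mu1 :: "nat \<Rightarrow> nat \<Rightarrow> nat \<Rightarrow> nat \<Rightarrow> complex" where
  "mu1 m p q = (\<lambda>j. epsf m p j - epsf m q j)"
definition mu2 :: "nat \<Rightarrow> nat \<Rightarrow> nat \<Rightarrow> nat \<Rightarrow> complex" where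
  "mu2 m p q = (\<lambda>j. (epsf m 0 j - (\<Sum>l=1..m. epsf m l j)) + (epsf m p j - epsf m q j))"

definition Lam :: "nat \<Rightarrow> nat \<Rightarrow> nat list \<Rightarrow> (nat \<Rightarrow> complex) set" where
  "Lam m n ws = (\<Union>k\<in>{..length ws}. \<Union>p\<in>{1..m}. \<Union>q\<in>{m+1..n}.
     {wact m n (take k ws) (mu1 m p q), wact m n (take k ws) (mu2 m p q)})"

lemma Lam_finite: "finite (Lam m n ws)"
  by (simp add: Lam_def)

lemma Lw_mu1: "Lw m n ws x p - Lw m n ws x q = pairing n (wact m n ws (mu1 m p q)) x"
  unfolding Lw_def mu1_def wact_diff pairing_diff ..

lemma Lw_mu2: "a0f m (Lw m n ws x) + (Lw m n ws x p - Lw m n ws x q) = pairing n (wact m n ws (mu2 m p q)) x"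
  unfolding Lw_def mu2_def wact_add wact_diff wact_sum[OF finite_atLeastAtMost] pairing_add pairing_diff
    pairing_sum a0f_def ..

lemma Lam_good:
  assumes "\<forall>lam\<in>Lam m n ws. s (pairing n lam x) \<noteq> 0"
  shows "\<forall>k\<le>length ws. NZ s m n (Lw m n (take k ws) x)"
proof (intro allI impI)
  fix k assume k: "k \<le> length ws"
  show "NZ s m n (Lw m n (take k ws) x)"
    unfolding NZ_def
  proof (intro ballI)
    fix p q assume p: "p \<in> {1..m}" and q: "q \<in> {m+1..n}"
    have "wact m n (take k ws) (mu1 m p q) \<in> Lam m n ws" "wact m n (take k ws) (mu2 m p q) \<in> Lam m n ws"
      unfolding Lam_def using k p q by blast+
    then show "s (Lw m n (take k ws) x p - Lw m n (take k ws) x q) \<noteq> 0 \<and>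
        s (a0f m (Lw m n (take k ws) x) + (Lw m n (take k ws) x p - Lw m n (take k ws) x q)) \<noteq> 0"
      unfolding Lw_mu2 unfolding Lw_mu1 using assms by blast
  qed
qed

lemma Lam_nonzero:
  assumes "set ws \<subseteq> {..<n}" "3 \<le> m" "m < n" "lam \<in> Lam m n ws"
  shows "\<exists>j\<le>n. lam j \<noteq> 0"
proof -
  from assms(4) obtain k where k: "k \<in> {..length ws}" and
    l1: "lam \<in> (\<Union>p\<in>{1..m}. \<Union>q\<in>{m+1..n}. {wact m n (take k ws) (mu1 m p q), wact m n (take k ws) (mu2 m p q)})"
    unfolding Lam_def by (rule UN_E)
  from l1 obtain p where p: "p \<in> {1..m}" and
    l2: "lam \<in> (\<Union>q\<in>{m+1..n}. {wact m n (take k ws) (mu1 m p q), wact m n (take k ws) (mu2 m p q)})"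
    by (rule UN_E)
  from l2 obtain q where q: "q \<in> {m+1..n}" and
    l3: "lam \<in> {wact m n (take k ws) (mu1 m p q), wact m n (take k ws) (mu2 m p q)}"
    by (rule UN_E)
  have kpq: "k \<le> length ws" "p \<in> {1..m}" "q \<in> {m+1..n}"
    "lam = wact m n (take k ws) (mu1 m p q) \<or> lam = wact m n (take k ws) (mu2 m p q)"
    using k p q l3 by auto
  have st: "set (take k ws) \<subseteq> {..<n}" using assms(1) set_take_subset[of k ws] by (rule order_trans[rotated])
  have n1: "mu1 m p q p \<noteq> 0" "p \<le> n" using kpq by (auto simp: mu1_def epsf_def gram_def)
  have s0: "(\<Sum>l=1..m. epsf m l 0) = 0" by (simp add: epsf_def)
  have p0: "epsf m p 0 = 0" "epsf m q 0 = 0" using kpq by (auto simp: epsf_def)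
  have "mu2 m p q 0 = - (of_nat m - 2)" unfolding mu2_def s0 p0 by (simp add: epsf_def gram_def)
  moreover have "(of_nat m :: complex) \<noteq> 2"
  proof
    assume "(of_nat m :: complex) = 2"
    then have "(of_nat m :: complex) = of_nat 2" by simp
    then have "m = 2" by (rule of_nat_eq_iff[THEN iffD1])
    then show False using assms(2) by simp
  qed
  ultimately have n2: "mu2 m p q 0 \<noteq> 0" by simp
  have z: "0 \<le> n" by simp
  from kpq(4) show ?thesis
  proof
    assume "lam = wact m n (take k ws) (mu1 m p q)"
    then show ?thesis using wact_nonzero[of "take k ws" n m p "mu1 m p q", OF st assms(3) n1(2) n1(1)] by simp
  next
    assume "lam = wact m n (take k ws) (mu2 m p q)"
    then show ?thesis using wact_nonzero[of "take k ws" n m 0 "mu2 m p q", OF st assms(3) z n2] by simp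
  qed
qed

theorem theorem2:
  fixes s :: "complex \<Rightarrow> complex" and m n :: nat
  assumes "3 \<le> m" and "m < n"
    and "s holomorphic_on UNIV"
    and "\<exists>z. s z \<noteq> 0"
    and "\<forall>z. s (- z) = - s z"
    and "riemann_relation s"
  shows "\<forall>ws i j. set ws \<subseteq> {..<n} \<and> 1 \<le> i \<and> i \<le> m - 1 \<and> m + 2 \<le> j \<and> j \<le> n \<longrightarrow>
    (\<exists>U. openin (top_of_set (hspace n)) U \<and> hspace n \<subseteq> closure U \<and>
      (\<forall>x\<in>U.
         ufun s m i j (\<lambda>k. pairing n (wact m n ws (epsf m k)) x) =
         Sw m n ws i j (\<lambda>a b. ufun s m a b (\<lambda>k. pairing n (epsf m k) x))))"
proof (intro allI impI)
  fix ws i j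
  assume H: "set ws \<subseteq> {..<n} \<and> 1 \<le> i \<and> i \<le> m - 1 \<and> m + 2 \<le> j \<and> j \<le> n"
  have ws: "set ws \<subseteq> {..<n}" and i: "i \<in> {1..m-1}" and j: "j \<in> {m+2..n}" and mn: "m + 2 \<le> n"
    using H by auto
  define U where "U = {x \<in> hspace n. \<forall>lam\<in>Lam m n ws. s (pairing n lam x) \<noteq> 0}"
  have od: "openin (top_of_set (hspace n)) U \<and> hspace n \<subseteq> closure U"
    unfolding U_def
    by (rule open_dense_finite[OF assms(3,4) Lam_finite]) (rule Lam_nonzero[OF ws assms(1,2)])
  have eq: "ufun s m i j (\<lambda>k. pairing n (wact m n ws (epsf m k)) x) =
         Sw m n ws i j (\<lambda>a b. ufun s m a b (\<lambda>k. pairing n (epsf m k) x))" if x: "x \<in> U" for x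
  proof -
    have good: "\<forall>k\<le>length ws. NZ s m n (Lw m n (take k ws) x)"
      by (rule Lam_good) (use x in \<open>simp add: U_def\<close>)
    have "ucoord m (config_act m n (Cx s m n x) ws) i j = ufun s m i j (Lw m n ws x)"
      using invariant[OF assms(1) mn assms(6,5) ws good] i j by blast
    moreover have "Cx s m n x = normal_config m (\<lambda>a b. ufun s m a b (\<lambda>k. pairing n (epsf m k) x))"
      by (simp add: Cx_def Lw_def wact_nil)
    ultimately show ?thesis by (simp add: Sw_def Lw_def)
  qed
  show "\<exists>U. openin (top_of_set (hspace n)) U \<and> hspace n \<subseteq> closure U \<and>
      (\<forall>x\<in>U. ufun s m i j (\<lambda>k. pairing n (wact m n ws (epsf m k)) x) =
         Sw m n ws i j (\<lambda>a b. ufun s m a b (\<lambda>k. pairing n (epsf m k) x)))"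
    using od eq by blast
qed

end
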